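(* Let $\epsilon>0$, $q>0$, let $\Lambda_\epsilon$ be an $\epsilon$-lattice under the $\ell_2$ norm, let $\mathbf{x}\in\mathbb{R}^d$, and let $\boldsymbol\theta$ be uniformly random in $\mathbf{Vor}(\mathbf{0})$. Then the number of lattice points $\boldsymbol\lambda\in\Lambda_\epsilon$ with $\mathbf{x}+\boldsymbol\theta\in\mathbf{Vor}^+(\boldsymbol\lambda)$ is at most $(1+2q)^{2d}$ with probability at least $1-(1+2q)^{-d}$.
   Context: A lattice is the set of integer combinations of a basis of $\mathbb{R}^d$. Under $\ell_2$, its packing radius $r_p$ is the supremum of $r$ such that balls of radius $r$ around distinct lattice points are disjoint and its cover radius $r_c$ is the infimum of $r$ such that balls of radius $r$ around lattice points cover $\mathbb{R}^d$; an $\epsilon$-lattice has $\epsilon=r_p\le r_c\le3\epsilon$. The Voronoi region of $\boldsymbol\lambda$ is $\mathbf{Vor}(\boldsymbol\lambda)=\{\mathbf{x}:\|\mathbf{x}-\boldsymbol\lambda\|_2<\|\mathbf{x}-\boldsymbol\lambda'\|_2\ \forall\boldsymbol\lambda'\in\Lambda_\epsilon\setminus\{\boldsymbol\lambda\}\}$. The expanded Voronoi region $\mathbf{Vor}^+(\boldsymbol\lambda)$ is the set of points within $\ell_2$ distance $2q\epsilon$ of $\mathbf{Vor}(\boldsymbol\lambda)$. *)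

theory Defs
  imports "HOL-Analysis.Analysis" "HOL-Probability.Probability"
begin

definition is_basis :: "'a::euclidean_space set \<Rightarrow> bool" where
  "is_basis B \<longleftrightarrow> independent B \<and> finite B \<and> card B = DIM('a)"

definition lattice_of :: "'a::euclidean_space set \<Rightarrow> 'a set" where
  "lattice_of B = {v. \<exists>c::'a \<Rightarrow> int. v = (\<Sum>b\<in>B. of_int (c b) *\<^sub>R b)}"

definition is_lattice :: "'a::euclidean_space set \<Rightarrow> bool" where
  "is_lattice L \<longleftrightarrow> (\<exists>B. is_basis B \<and> L = lattice_of B)"

definition packing_radius :: "'a::euclidean_space set \<Rightarrow> real" where
  "packing_radius L = Sup {r. r \<ge> 0 \<and>
     (\<forall>l\<in>L. \<forall>l'\<in>L. l \<noteq> l' \<longrightarrow> ball l r \<inter> ball l' r = {})}"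

definition cover_radius :: "'a::euclidean_space set \<Rightarrow> real" where
  "cover_radius L = Inf {r. r \<ge> 0 \<and> (\<Union>l\<in>L. cball l r) = UNIV}"

definition eps_lattice :: "real \<Rightarrow> 'a::euclidean_space set \<Rightarrow> bool" where
  "eps_lattice \<epsilon> L \<longleftrightarrow> is_lattice L \<and> packing_radius L = \<epsilon> \<and>
     \<epsilon> \<le> cover_radius L \<and> cover_radius L \<le> 3 * \<epsilon>"

definition Vor :: "'a::euclidean_space set \<Rightarrow> 'a \<Rightarrow> 'a set" where
  "Vor L l = {x. \<forall>l'\<in>L - {l}. dist x l < dist x l'}"

definition Vor_plus :: "real \<Rightarrow> real \<Rightarrow> 'a::euclidean_space set \<Rightarrow> 'a \<Rightarrow> 'a set" where
  "Vor_plus q \<epsilon> L l = {x. infdist x (Vor L l) \<le> 2 * q * \<epsilon>}"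

end

theory Submission
  imports Defs
begin

lemma lat_basic:
  assumes "is_lattice (L::'a::euclidean_space set)"
  shows "0 \<in> L" "\<And>a b. a \<in> L \<Longrightarrow> b \<in> L \<Longrightarrow> a - b \<in> L"
proof -
  obtain B where B: "is_basis B" "L = lattice_of B" using assms is_lattice_def by blast
  show "0 \<in> L" unfolding B lattice_of_def
    by (rule CollectI, rule exI[of _ "\<lambda>_. 0"]) simp
  fix a b assume "a \<in> L" "b \<in> L"
  then obtain c1 c2 where c: "a = (\<Sum>b\<in>B. of_int (c1 b) *\<^sub>R b)" "b = (\<Sum>b\<in>B. of_int (c2 b) *\<^sub>R b)"
    unfolding B lattice_of_def by blast
  have "a - b = (\<Sum>v\<in>B. of_int (c1 v - c2 v) *\<^sub>R v)"
    unfolding c by (simp add: sum_subtractf[symmetric] scaleR_diff_left)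
  then show "a - b \<in> L" unfolding B lattice_of_def
    by (intro CollectI exI[of _ "\<lambda>v. c1 v - c2 v"])
qed

lemma lat_countable:
  assumes "is_lattice (L::'a::euclidean_space set)"
  shows "countable L"
proof -
  obtain B where B: "is_basis B" "L = lattice_of B" using assms is_lattice_def by blast
  have fin: "finite B" using B is_basis_def by blast
  have "L \<subseteq> (\<lambda>c. \<Sum>b\<in>B. of_int (c b) *\<^sub>R b) ` (B \<rightarrow>\<^sub>E (UNIV::int set))"
  proof
    fix v assume "v \<in> L"
    then obtain c where c: "v = (\<Sum>b\<in>B. of_int (c b) *\<^sub>R b)" unfolding B lattice_of_def by blast
    have "v = (\<Sum>b\<in>B. of_int (restrict c B b) *\<^sub>R b)" unfolding c by (rule sum.cong) auto
    moreover have "restrict c B \<in> B \<rightarrow>\<^sub>E (UNIV::int set)" by auto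
    ultimately show "v \<in> (\<lambda>c. \<Sum>b\<in>B. of_int (c b) *\<^sub>R b) ` (B \<rightarrow>\<^sub>E (UNIV::int set))" by blast
  qed
  moreover have "countable (B \<rightarrow>\<^sub>E (UNIV::int set))" by (rule countable_PiE) (use fin in auto)
  ultimately show ?thesis by (meson countable_image countable_subset)
qed

lemma lat_cover:
  assumes "is_lattice (L::'a::euclidean_space set)"
  shows "\<exists>R. \<forall>z. \<exists>l\<in>L. dist z l \<le> R"
proof -
  obtain B where B: "is_basis B" "L = lattice_of B" using assms is_lattice_def by blast
  have fin: "finite B" and ind: "independent B" and cB: "card B = DIM('a)" using B is_basis_def by auto
  have sp: "UNIV \<subseteq> span B"
    using card_ge_dim_independent[of B UNIV] ind cB by simp
  show ?thesis
  proof (intro exI allI)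
    fix z :: 'a
    have "z \<in> span B" using sp by blast
    then obtain u where u: "z = (\<Sum>v\<in>B. u v *\<^sub>R v)" using span_finite[OF fin] by blast
    define l where "l = (\<Sum>v\<in>B. of_int (floor (u v)) *\<^sub>R v)"
    have "l \<in> L" unfolding B lattice_of_def l_def
      by (intro CollectI exI[of _ "\<lambda>v. floor (u v)"]) simp
    have "z - l = (\<Sum>v\<in>B. (u v - of_int (floor (u v))) *\<^sub>R v)"
      unfolding u l_def by (simp add: sum_subtractf[symmetric] scaleR_diff_left)
    then have "norm (z - l) \<le> (\<Sum>v\<in>B. norm ((u v - of_int (floor (u v))) *\<^sub>R v))"
      by (metis norm_sum)
    also have "\<dots> \<le> (\<Sum>v\<in>B. norm v)"
    proof (rule sum_mono)
      fix v assume "v \<in> B"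
      have "\<bar>u v - of_int (floor (u v))\<bar> \<le> 1" by linarith
      then show "norm ((u v - of_int (floor (u v))) *\<^sub>R v) \<le> norm v"
        by (simp add: mult_left_le_one_le)
    qed
    finally show "\<exists>l\<in>L. dist z l \<le> (\<Sum>v\<in>B. norm v)" using \<open>l \<in> L\<close> by (auto simp: dist_norm)
  qed
qed

lemma lat_sep:
  assumes "packing_radius (L::'a::euclidean_space set) = \<epsilon>" "l \<in> L" "l' \<in> L" "l \<noteq> l'"
  shows "2 * \<epsilon> \<le> dist l l'"
proof (rule ccontr)
  assume "\<not> 2 * \<epsilon> \<le> dist l l'"
  define S where "S = {r. r \<ge> 0 \<and> (\<forall>l\<in>L. \<forall>l'\<in>L. l \<noteq> l' \<longrightarrow> ball l r \<inter> ball l' r = {})}"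
  have "0 \<in> S" unfolding S_def by auto
  have bd: "r \<le> dist l l' / 2" if "r \<in> S" for r
  proof (rule ccontr)
    assume "\<not> r \<le> dist l l' / 2"
    define m where "m = midpoint l l'"
    have "dist l m = dist l l' / 2" "dist l' m = dist l l' / 2"
      unfolding m_def by (simp_all add: dist_midpoint)
    then have "m \<in> ball l r \<inter> ball l' r" using \<open>\<not> r \<le> dist l l' / 2\<close> by auto
    then show False using that assms(2-4) unfolding S_def by blast
  qed
  have "Sup S \<le> dist l l' / 2" by (rule cSup_least) (use \<open>0 \<in> S\<close> bd in auto)
  then show False using assms(1) \<open>\<not> 2 * \<epsilon> \<le> dist l l'\<close> unfolding packing_radius_def S_def by simp
qed

lemma dist_iff_lt: "dist z 0 < dist z l \<longleftrightarrow> 2 * (z \<bullet> l) < l \<bullet> (l::'a::euclidean_space)"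
  by (simp add: dist_norm norm_lt inner_diff_left inner_diff_right inner_commute algebra_simps)

lemma dist_iff_le: "dist z 0 \<le> dist z l \<longleftrightarrow> 2 * (z \<bullet> l) \<le> l \<bullet> (l::'a::euclidean_space)"
  by (simp add: dist_norm norm_le inner_diff_left inner_diff_right inner_commute algebra_simps)

lemma vor0_eq: "Vor L 0 = {z. \<forall>l\<in>L-{0}. 2 * (z \<bullet> l) < l \<bullet> (l::'a::euclidean_space)}"
  unfolding Vor_def using dist_iff_lt by blast

lemma vor_shift:
  assumes "is_lattice (L::'a::euclidean_space set)" "lam \<in> L"
  shows "z \<in> Vor L lam \<longleftrightarrow> z - lam \<in> Vor L 0"
proof -
  note lb = lat_basic[OF assms(1)]
  have add: "a + b \<in> L" if "a \<in> L" "b \<in> L" for a b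
    using lb(2)[OF that(1) lb(2)[OF lb(1) that(2)]] by simp
  show ?thesis
  proof
    assume z: "z \<in> Vor L lam"
    show "z - lam \<in> Vor L 0" unfolding Vor_def
    proof (intro CollectI ballI)
      fix m assume m: "m \<in> L - {0}"
      then have "m + lam \<in> L - {lam}" using add assms(2) by auto
      then have "dist z lam < dist z (m + lam)" using z unfolding Vor_def by blast
      then show "dist (z - lam) 0 < dist (z - lam) m" by (simp add: dist_norm algebra_simps)
    qed
  next
    assume z: "z - lam \<in> Vor L 0"
    show "z \<in> Vor L lam" unfolding Vor_def
    proof (intro CollectI ballI)
      fix l' assume l': "l' \<in> L - {lam}"
      then have "l' - lam \<in> L - {0}" using lb assms(2) by auto
      then have "dist (z - lam) 0 < dist (z - lam) (l' - lam)" using z unfolding Vor_def by blast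
      then show "dist z lam < dist z l'" by (simp add: dist_norm algebra_simps)
    qed
  qed
qed

lemma vplus_shift:
  assumes "is_lattice (L::'a::euclidean_space set)" "lam \<in> L"
  shows "y \<in> Vor_plus q \<epsilon> L lam \<longleftrightarrow> y - lam \<in> Vor_plus q \<epsilon> L 0"
proof -
  have im: "Vor L lam = (\<lambda>z. z + lam) ` Vor L 0"
  proof (intro set_eqI iffI)
    fix z assume "z \<in> Vor L lam"
    then have "z - lam \<in> Vor L 0" using vor_shift[OF assms] by blast
    then show "z \<in> (\<lambda>z. z + lam) ` Vor L 0" by (intro image_eqI[of _ _ "z - lam"]) auto
  next
    fix z assume "z \<in> (\<lambda>z. z + lam) ` Vor L 0"
    then show "z \<in> Vor L lam" using vor_shift[OF assms] by auto
  qed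
  have "infdist y (Vor L lam) = infdist (y - lam) (Vor L 0)"
  proof (cases "Vor L 0 = {}")
    case True then show ?thesis using im by (simp add: infdist_def)
  next
    case False
    then have "Vor L lam \<noteq> {}" using im by auto
    then have "infdist y (Vor L lam) = (INF a\<in>(\<lambda>z. z + lam) ` Vor L 0. dist y a)"
      using im infdist_notempty by metis
    also have "\<dots> = (INF a\<in>Vor L 0. dist (y - lam) a)"
      by (simp add: image_image dist_norm algebra_simps)
    also have "\<dots> = infdist (y - lam) (Vor L 0)" using False infdist_notempty by metis
    finally show ?thesis .
  qed
  then show ?thesis unfolding Vor_plus_def by simp
qed

lemma meas_count_nn:
  fixes f :: "'i \<Rightarrow> 'a \<Rightarrow> ennreal"
  assumes "countable I" and [measurable]: "\<And>i. i \<in> I \<Longrightarrow> f i \<in> borel_measurable M"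
  shows "(\<lambda>x. \<integral>\<^sup>+i. f i x \<partial>count_space I) \<in> borel_measurable M"
proof cases
  assume "finite I" then show ?thesis
    by (simp add: nn_integral_count_space_finite)
next
  assume "infinite I"
  then have [simp]: "I \<noteq> {}"
    by auto
  note * = bij_betw_from_nat_into[OF \<open>countable I\<close> \<open>infinite I\<close>]
  have **: "\<And>f. (\<And>i. 0 \<le> f i) \<Longrightarrow> (\<integral>\<^sup>+i. f i \<partial>count_space I) = (\<Sum>n. f (from_nat_into I n))"
    by (simp add: nn_integral_bij_count_space[symmetric, OF *] nn_integral_count_space_nat)
  show ?thesis
    by (simp add: ** from_nat_into)
qed

theorem lemma31:
  fixes \<epsilon> q :: real and L :: "'a::euclidean_space set" and x :: 'a
  assumes "\<epsilon> > 0" and "q > 0" and "eps_lattice \<epsilon> L"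
  shows "measure (uniform_measure lborel (Vor L 0))
           {\<theta> \<in> Vor L 0. finite {l\<in>L. x + \<theta> \<in> Vor_plus q \<epsilon> L l} \<and>
              real (card {l\<in>L. x + \<theta> \<in> Vor_plus q \<epsilon> L l}) \<le> (1 + 2*q) powr (2 * real DIM('a))}
         \<ge> 1 - (1 + 2*q) powr (- real DIM('a))"
proof -
  have lat: "is_lattice L" and pr: "packing_radius L = \<epsilon>" using assms(3) eps_lattice_def by auto
  note lb = lat_basic[OF lat]
  have cnt: "countable L" by (rule lat_countable[OF lat])
  have sep: "2 * \<epsilon> \<le> norm l" if "l \<in> L - {0}" for l
    using lat_sep[OF pr lb(1), of l] that by (simp add: dist_norm)
  define d where "d = DIM('a)"
  define r where "r = 1 + 2 * q"
  have r1: "r > 1" using assms(2) r_def by simp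
  define V where "V = Vor L 0"
  define C where "C = {z. \<forall>l\<in>L-{0}. 2 * (z \<bullet> l) \<le> l \<bullet> l}"
  define W where "W = Vor_plus q \<epsilon> L 0"
  have Veq: "V = {z. \<forall>l\<in>L-{0}. 2 * (z \<bullet> l) < l \<bullet> l}" unfolding V_def by (rule vor0_eq)
  have V_meas[measurable]: "V \<in> sets borel"
  proof -
    have "{z \<in> space borel. \<forall>l\<in>L-{0}. 2 * (z \<bullet> l) < l \<bullet> l} \<in> sets borel"
      by (rule sets.sets_Collect_countable_All') (use cnt in auto)
    then show ?thesis unfolding Veq by simp
  qed
  have Cint: "C = (\<Inter>l\<in>L-{0}. {z. (2 *\<^sub>R l) \<bullet> z \<le> l \<bullet> l})"
    unfolding C_def by (auto simp: inner_commute)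
  have C_closed: "closed C" unfolding Cint by (intro closed_INT ballI closed_halfspace_le)
  have C_convex: "convex C" unfolding Cint by (intro convex_INT ballI convex_halfspace_le)
  have C_meas[measurable]: "C \<in> sets borel" using C_closed by simp
  have VC: "V \<subseteq> C" unfolding Veq C_def by force
  have cs: "2 * (z \<bullet> l) \<le> 2 * (norm z * norm l)" for z l :: 'a
    using norm_cauchy_schwarz[of z l] by simp
  have ll: "l \<bullet> l = norm l * norm l" for l :: 'a by (simp add: power2_norm_eq_inner[symmetric] power2_eq_square)
  have ballV: "ball 0 \<epsilon> \<subseteq> V"
  proof
    fix z :: 'a assume "z \<in> ball 0 \<epsilon>"
    then have nz: "norm z < \<epsilon>" by simp
    show "z \<in> V" unfolding Veq
    proof (intro CollectI ballI)
      fix l assume l: "l \<in> L - {0}"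
      have "norm l > 0" using l by auto
      have "2 * (norm z * norm l) < 2 * (\<epsilon> * norm l)" using nz \<open>norm l > 0\<close> by simp
      also have "\<dots> \<le> norm l * norm l" using sep[OF l] \<open>norm l > 0\<close> by (simp add: mult_right_mono)
      finally show "2 * (z \<bullet> l) < l \<bullet> l" using cs[of z l] ll[of l] by linarith
    qed
  qed
  have cballC: "cball 0 \<epsilon> \<subseteq> C"
  proof
    fix z :: 'a assume "z \<in> cball 0 \<epsilon>"
    then have nz: "norm z \<le> \<epsilon>" by simp
    show "z \<in> C" unfolding C_def
    proof (intro CollectI ballI)
      fix l assume l: "l \<in> L - {0}"
      have "norm l > 0" using l by auto
      have "2 * (norm z * norm l) \<le> 2 * (\<epsilon> * norm l)" using nz \<open>norm l > 0\<close> by simp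
      also have "\<dots> \<le> norm l * norm l" using sep[OF l] \<open>norm l > 0\<close> by (simp add: mult_right_mono)
      finally show "2 * (z \<bullet> l) \<le> l \<bullet> l" using cs[of z l] ll[of l] by linarith
    qed
  qed
  obtain R where R: "\<And>z. \<exists>l\<in>L. dist z l \<le> R" using lat_cover[OF lat] by blast
  have C_bdd: "C \<subseteq> cball 0 R"
  proof
    fix z assume z: "z \<in> C"
    obtain l where l: "l \<in> L" "dist z l \<le> R" using R by blast
    have "dist z 0 \<le> dist z l"
    proof (cases "l = 0")
      case False
      then show ?thesis using z l(1) unfolding C_def dist_iff_le by blast
    qed simp
    then show "z \<in> cball 0 R" using l by (simp add: dist_commute)
  qed
  have lbl: "lebesgue = completion lborel" by simp
  have eqleb: "emeasure lebesgue S = emeasure lborel S" if "S \<in> sets borel" for S :: "'a set"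
    using that by simp
  have V_fin: "emeasure lborel V < \<infinity>"
    using emeasure_mono[OF order.trans[OF VC C_bdd], of lborel, simplified] emeasure_lborel_cball_finite[of 0 R]
    by (meson order.strict_trans1)
  have C_fin: "emeasure lborel C < \<infinity>"
    using emeasure_mono[OF C_bdd, of lborel, simplified] emeasure_lborel_cball_finite[of 0 R]
    by (meson order.strict_trans1)
  define m where "m = measure lborel V"
  have Vm: "emeasure lborel V = ennreal m" unfolding m_def using V_fin by (simp add: emeasure_eq_ennreal_measure)
  have m_pos: "m > 0"
  proof -
    have "V \<in> fmeasurable lborel" using V_fin by (simp add: fmeasurable_def)
    then have "measure lborel (ball (0::'a) \<epsilon>) \<le> m"
      unfolding m_def by (intro measure_mono_fmeasurable[OF ballV]) simp_all
    moreover have "measure lborel (ball (0::'a) \<epsilon>) > 0" using content_ball_pos[OF assms(1)] by blast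
    ultimately show ?thesis by linarith
  qed
  have CV: "emeasure lborel C \<le> emeasure lborel V"
  proof -
    define Nn where "Nn = (\<Union>l\<in>L-{0}. {z. (2 *\<^sub>R l) \<bullet> z = l \<bullet> l})"
    have "negligible Nn" unfolding Nn_def
    proof (rule negligible_countable_Union)
      show "countable ((\<lambda>l. {z. (2 *\<^sub>R l) \<bullet> z = l \<bullet> l}) ` (L - {0}))" using cnt by auto
    next
      fix S assume "S \<in> (\<lambda>l. {z. (2 *\<^sub>R l) \<bullet> z = l \<bullet> l}) ` (L - {0})"
      then obtain l where "l \<in> L - {0}" "S = {z. (2 *\<^sub>R l) \<bullet> z = l \<bullet> l}" by blast
      then show "negligible S" using negligible_hyperplane[of "2 *\<^sub>R l" "l \<bullet> l"] by auto
    qed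
    moreover have "C - V \<subseteq> Nn" unfolding C_def Veq Nn_def by (force simp: inner_commute)
    ultimately have "negligible (C - V)" using negligible_subset by blast
    then have "C - V \<in> null_sets lebesgue" using negligible_iff_null_sets by blast
    then have "emeasure lebesgue (C - V) = 0" by auto
    then have nul: "C - V \<in> null_sets lborel" using eqleb[of "C - V"] by auto
    have "C = V \<union> (C - V)" using VC by auto
    then have "emeasure lborel C = emeasure lborel (V \<union> (C - V))" by simp
    also have "\<dots> = emeasure lborel V" by (rule emeasure_Un_null_set) (use nul in auto)
    finally show ?thesis by simp
  qed
  have W_closed: "closed W" unfolding W_def Vor_plus_def
    by (intro closed_Collect_le continuous_on_infdist continuous_intros)
  have W_meas[measurable]: "W \<in> sets borel" using W_closed by simp
  have V0: "0 \<in> V" using ballV assms(1) by auto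
  define Sc where "Sc = {z. (1 / r) *\<^sub>R z \<in> C}"
  have Sc_meas[measurable]: "Sc \<in> sets borel" unfolding Sc_def by measurable
  have WSc: "W \<subseteq> Sc"
  proof
    fix z assume "z \<in> W"
    then have "infdist z V \<le> 2 * q * \<epsilon>" unfolding W_def Vor_plus_def V_def by simp
    moreover have "infdist z C \<le> infdist z V" using infdist_mono[OF VC] V0 by auto
    moreover obtain v where v: "v \<in> C" "infdist z C = dist z v"
      using infdist_attains_inf[OF C_closed, of z] V0 VC by auto
    ultimately have dv: "norm (z - v) \<le> 2 * q * \<epsilon>" by (simp add: dist_norm)
    define w where "w = (1 / (2 * q)) *\<^sub>R (z - v)"
    have "norm w = norm (z - v) / (2 * q)" unfolding w_def using assms(2) by simp
    also have "\<dots> \<le> \<epsilon>" using dv assms(2) by (simp add: divide_le_eq mult.commute mult.left_commute)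
    finally have "norm w \<le> \<epsilon>" .
    then have wC: "w \<in> C" using cballC by auto
    have "(1 / r) *\<^sub>R z = (1 / r) *\<^sub>R v + (2 * q / r) *\<^sub>R w"
      unfolding w_def using assms(2) r1 by (simp add: algebra_simps)
    moreover have "(1 / r) *\<^sub>R v + (2 * q / r) *\<^sub>R w \<in> C"
      using convexD[OF C_convex v(1) wC, of "1/r" "2*q/r"] r1 assms(2)
      by (simp add: r_def add_divide_distrib[symmetric])
    ultimately show "z \<in> Sc" unfolding Sc_def by simp
  qed
  have Sc_img: "Sc = (\<lambda>z. r *\<^sub>R z + 0) ` C"
  proof (intro set_eqI iffI)
    fix z assume "z \<in> Sc"
    then show "z \<in> (\<lambda>z. r *\<^sub>R z + 0) ` C" unfolding Sc_def using r1
      by (intro image_eqI[of _ _ "(1/r) *\<^sub>R z"]) auto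
  qed (use r1 in \<open>auto simp: Sc_def\<close>)
  have Sc_m: "emeasure lborel Sc = ennreal (r ^ d) * emeasure lborel C"
  proof -
    have "emeasure lborel Sc = emeasure lebesgue Sc" using eqleb[OF Sc_meas] by simp
    also have "\<dots> = \<bar>r\<bar> ^ DIM('a) * emeasure lebesgue C" unfolding Sc_img
      by (rule emeasure_lebesgue_affine)
    also have "\<dots> = ennreal (r ^ d) * emeasure lborel C"
      using eqleb[OF C_meas] r1 by (simp add: d_def ennreal_power)
    finally show ?thesis .
  qed
  have W_m: "emeasure lborel W \<le> ennreal (r ^ d) * ennreal m"
  proof -
    have "emeasure lborel W \<le> emeasure lborel Sc" by (rule emeasure_mono[OF WSc]) simp
    also have "\<dots> \<le> ennreal (r ^ d) * emeasure lborel V" unfolding Sc_m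
      by (rule mult_left_mono[OF CV]) simp
    finally show ?thesis using Vm by simp
  qed
  define A where "A = (\<lambda>l. {\<theta> \<in> V. x + \<theta> \<in> Vor_plus q \<epsilon> L l})"
  define B where "B = (\<lambda>l. {z \<in> W. z - (x - l) \<in> V})"
  have A_alt: "A l = {\<theta> \<in> V. x + \<theta> - l \<in> W}" if "l \<in> L" for l
    unfolding A_def W_def using vplus_shift[OF lat that] by auto
  have A_meas[measurable]: "A l \<in> sets borel" if "l \<in> L" for l
    unfolding A_alt[OF that] by measurable
  have B_meas[measurable]: "B l \<in> sets borel" for l
    unfolding B_def by measurable
  have AB: "emeasure lborel (A l) = emeasure lborel (B l)" if "l \<in> L" for l
  proof -
    have img: "A l = (\<lambda>z. 1 *\<^sub>R z + (l - x)) ` B l"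
    proof (intro set_eqI iffI)
      fix \<theta> assume "\<theta> \<in> A l"
      then show "\<theta> \<in> (\<lambda>z. 1 *\<^sub>R z + (l - x)) ` B l" unfolding A_alt[OF that] B_def
        by (intro image_eqI[of _ _ "x + \<theta> - l"]) (auto simp: algebra_simps)
    next
      fix \<theta> assume "\<theta> \<in> (\<lambda>z. 1 *\<^sub>R z + (l - x)) ` B l"
      then show "\<theta> \<in> A l" unfolding A_alt[OF that] B_def by (auto simp: algebra_simps)
    qed
    have "emeasure lborel (A l) = emeasure lebesgue (A l)" using eqleb[OF A_meas[OF that]] by simp
    also have "\<dots> = emeasure lebesgue (B l)" unfolding img
      using emeasure_lebesgue_affine[of 1 "l - x" "B l"] by simp
    also have "\<dots> = emeasure lborel (B l)" using eqleb[OF B_meas] by simp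
    finally show ?thesis .
  qed
  have B_disj: "disjoint_family_on B L"
  unfolding disjoint_family_on_def
  proof (intro ballI impI)
    fix l l' assume ll: "l \<in> L" "l' \<in> L" "l \<noteq> l'"
    show "B l \<inter> B l' = {}"
    proof (rule ccontr)
      assume "B l \<inter> B l' \<noteq> {}"
      then obtain z where z: "z - (x - l) \<in> V" "z - (x - l') \<in> V" unfolding B_def by blast
      define u where "u = z - (x - l)"
      define \<nu> where "\<nu> = l' - l"
      have \<nu>1: "\<nu> \<in> L - {0}" unfolding \<nu>_def using lb(2)[OF ll(2,1)] ll(3) by auto
      have \<nu>2: "-\<nu> \<in> L - {0}" unfolding \<nu>_def using lb(2)[OF ll(1,2)] ll(3) by auto
      have "u \<in> V" using z(1) u_def by simp
      then have i1: "2 * (u \<bullet> (-\<nu>)) < (-\<nu>) \<bullet> (-\<nu>)" using \<nu>2 unfolding Veq by blast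
      have "u + \<nu> \<in> V" using z(2) unfolding u_def \<nu>_def by (simp add: algebra_simps)
      then have i2: "2 * ((u + \<nu>) \<bullet> \<nu>) < \<nu> \<bullet> \<nu>" using \<nu>1 unfolding Veq by blast
      from i1 i2 show False by (simp add: inner_add_left)
    qed
  qed
  have UB: "(\<Union>l\<in>L. B l) \<subseteq> W" unfolding B_def by auto
  define N where "N = (\<lambda>\<theta>. \<integral>\<^sup>+l. indicator (A l) \<theta> \<partial>count_space L)"
  have N_meas[measurable]: "N \<in> borel_measurable lborel"
    unfolding N_def by (rule meas_count_nn[OF cnt]) simp
  have intN: "(\<integral>\<^sup>+\<theta>. N \<theta> \<partial>lborel) \<le> ennreal (r ^ d) * ennreal m"
  proof -
    have "(\<integral>\<^sup>+\<theta>. N \<theta> \<partial>lborel) = (\<integral>\<^sup>+l. \<integral>\<^sup>+\<theta>. indicator (A l) \<theta> \<partial>lborel \<partial>count_space L)"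
      unfolding N_def by (rule nn_integral_count_space_nn_integral[OF cnt]) simp
    also have "\<dots> = (\<integral>\<^sup>+l. emeasure lborel (B l) \<partial>count_space L)"
      by (rule nn_integral_cong) (simp add: AB)
    also have "\<dots> = emeasure lborel (\<Union>l\<in>L. B l)"
      by (rule emeasure_UN_countable[symmetric]) (use cnt B_disj in auto)
    also have "\<dots> \<le> emeasure lborel W" by (rule emeasure_mono[OF UB]) simp
    also have "\<dots> \<le> ennreal (r ^ d) * ennreal m" by (rule W_m)
    finally show ?thesis .
  qed
  define K where "K = (1 + 2*q) powr (2 * real DIM('a))"
  have Kpos: "K > 0" unfolding K_def using assms(2) by simp
  have K_eq: "K = r ^ d * r ^ d" unfolding K_def r_def d_def using assms(2)
    by (simp add: powr_realpow[symmetric] powr_add[symmetric] algebra_simps)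
  define G where "G = {\<theta> \<in> Vor L 0. finite {l\<in>L. x + \<theta> \<in> Vor_plus q \<epsilon> L l} \<and>
              real (card {l\<in>L. x + \<theta> \<in> Vor_plus q \<epsilon> L l}) \<le> (1 + 2*q) powr (2 * real DIM('a))}"
  have Ncard: "N \<theta> = (if finite {l\<in>L. x + \<theta> \<in> Vor_plus q \<epsilon> L l}
      then of_nat (card {l\<in>L. x + \<theta> \<in> Vor_plus q \<epsilon> L l}) else \<infinity>)" if "\<theta> \<in> V" for \<theta>
  proof -
    have "N \<theta> = (\<integral>\<^sup>+l. indicator {l\<in>L. x + \<theta> \<in> Vor_plus q \<epsilon> L l} l \<partial>count_space L)"
      unfolding N_def by (rule nn_integral_cong) (use that in \<open>auto simp: A_def indicator_def\<close>)
    also have "\<dots> = emeasure (count_space L) {l\<in>L. x + \<theta> \<in> Vor_plus q \<epsilon> L l}"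
      by (rule nn_integral_indicator) auto
    also have "\<dots> = (if finite {l\<in>L. x + \<theta> \<in> Vor_plus q \<epsilon> L l}
      then of_nat (card {l\<in>L. x + \<theta> \<in> Vor_plus q \<epsilon> L l}) else \<infinity>)"
      by (rule emeasure_count_space) auto
    finally show ?thesis .
  qed
  have G_eq: "G = {\<theta> \<in> V. N \<theta> \<le> ennreal K}"
  proof (intro set_eqI iffI)
    fix \<theta> assume "\<theta> \<in> G"
    then show "\<theta> \<in> {\<theta> \<in> V. N \<theta> \<le> ennreal K}" unfolding G_def V_def[symmetric] K_def[symmetric]
      using Ncard Kpos by (auto simp: ennreal_of_nat_eq_real_of_nat)
  next
    fix \<theta> assume "\<theta> \<in> {\<theta> \<in> V. N \<theta> \<le> ennreal K}"
    then show "\<theta> \<in> G" unfolding G_def V_def[symmetric] K_def[symmetric]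
      using Ncard Kpos by (auto simp: ennreal_of_nat_eq_real_of_nat top_unique split: if_splits)
  qed
  define Bd where "Bd = {\<theta> \<in> V. ennreal K < N \<theta>}"
  have G_meas[measurable]: "G \<in> sets borel" unfolding G_eq by measurable
  have Bd_meas[measurable]: "Bd \<in> sets borel" unfolding Bd_def by measurable
  have GBd: "G = V - Bd" unfolding G_eq Bd_def by auto
  have BdV: "Bd \<subseteq> V" unfolding Bd_def by auto
  have Bd_fin: "emeasure lborel Bd < \<infinity>"
    using emeasure_mono[OF BdV, of lborel, simplified] V_fin by (meson order.strict_trans1)
  define mb where "mb = measure lborel Bd"
  have Bdm: "emeasure lborel Bd = ennreal mb" unfolding mb_def using Bd_fin
    by (simp add: emeasure_eq_ennreal_measure)
  have "ennreal K * emeasure lborel Bd = (\<integral>\<^sup>+\<theta>. ennreal K * indicator Bd \<theta> \<partial>lborel)"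
    by (simp add: nn_integral_cmult_indicator)
  also have "\<dots> \<le> (\<integral>\<^sup>+\<theta>. N \<theta> \<partial>lborel)"
    by (rule nn_integral_mono) (auto simp: Bd_def indicator_def less_imp_le)
  also have "\<dots> \<le> ennreal (r ^ d) * ennreal m" by (rule intN)
  finally have "ennreal (K * mb) \<le> ennreal (r ^ d * m)"
    using Bdm Kpos m_pos r1 ennreal_mult[of K mb] ennreal_mult[of "r ^ d" m]
    by (simp add: mb_def)
  then have Kmb: "K * mb \<le> r ^ d * m" using m_pos r1 by (simp add: ennreal_le_iff)
  have rd: "r ^ d > 0" using r1 by simp
  have mb_le: "mb \<le> m / r ^ d"
  proof -
    have "r ^ d * (r ^ d * mb) \<le> r ^ d * m" using Kmb K_eq by (simp add: mult.assoc)
    then have "r ^ d * mb \<le> m" using rd by simp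
    then show ?thesis using rd by (simp add: field_simps)
  qed
  have mG: "measure lborel G = m - mb" unfolding GBd m_def mb_def
    by (rule measure_Diff) (use V_fin BdV in auto)
  have "measure (uniform_measure lborel V) G = measure lborel (V \<inter> G) / m"
    unfolding m_def by (rule measure_uniform_measure) (use V_fin m_pos Vm in auto)
  also have "V \<inter> G = G" using GBd by auto
  finally have u: "measure (uniform_measure lborel V) G = (m - mb) / m" using mG by simp
  have pw: "(1 + 2*q) powr (- real DIM('a)) = 1 / r ^ d"
    unfolding r_def d_def using assms(2) by (simp add: powr_minus powr_realpow divide_inverse)
  have "1 - 1 / r ^ d \<le> (m - mb) / m"
    using mb_le m_pos rd by (simp add: field_simps)
  then show ?thesis using u pw unfolding G_def V_def by simp
qed

end
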